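(* Let $F\subseteq\mathbb{R}$ be a countable subfield of $\mathbb{R}$ that is closed under Turing equivalence. Then there is a set $\mathcal{C}$ of Turing degrees, linearly ordered by $\le_T$, such that $F=\mathbb{R}_{\wedge\mathcal{C}}$, the set of all reals computable from some real whose degree lies in $\mathcal{C}$.
   Context: A set of reals is closed under Turing equivalence if it contains every real Turing equivalent to one of its elements. *)

theory Defs
  imports Complex_Main "HOL-Library.Nat_Bijection" "HOL-Library.Countable_Set"
begin

inductive rec_in :: "(nat \<Rightarrow> nat) \<Rightarrow> nat \<Rightarrow> (nat list \<Rightarrow> nat) \<Rightarrow> bool"
  for g :: "nat \<Rightarrow> nat" where
  r_zero: "rec_in g n (\<lambda>xs. 0)"
| r_succ: "rec_in g 1 (\<lambda>xs. Suc (hd xs))"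
| r_proj: "i < n \<Longrightarrow> rec_in g n (\<lambda>xs. xs ! i)"
| r_oracle: "rec_in g 1 (\<lambda>xs. g (hd xs))"
| r_comp: "rec_in g m h \<Longrightarrow> length fs = m \<Longrightarrow> (\<forall>f\<in>set fs. rec_in g n f)
    \<Longrightarrow> rec_in g n (\<lambda>xs. h (map (\<lambda>f. f xs) fs))"
| r_prim: "rec_in g n b \<Longrightarrow> rec_in g (Suc (Suc n)) s
    \<Longrightarrow> rec_in g (Suc n) (\<lambda>xs. rec_nat (b (tl xs)) (\<lambda>k acc. s (k # acc # tl xs)) (hd xs))"
| r_min: "rec_in g (Suc n) p \<Longrightarrow> (\<forall>xs. length xs = n \<longrightarrow> (\<exists>y. p (y # xs) = 0))
    \<Longrightarrow> rec_in g n (\<lambda>xs. LEAST y. p (y # xs) = 0)"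
| r_ext: "rec_in g n f \<Longrightarrow> (\<forall>xs. length xs = n \<longrightarrow> f xs = f' xs) \<Longrightarrow> rec_in g n f'"

definition turing_le_set :: "nat set \<Rightarrow> nat set \<Rightarrow> bool" where
  "turing_le_set A B \<longleftrightarrow> rec_in (\<lambda>k. of_bool (k \<in> B)) 1 (\<lambda>xs. of_bool (hd xs \<in> A))"

text \<open>Left Dedekind cut of a real, coded as a set of naturals: n codes the rational
 (a - b)/(c + 1) via Cantor pairing n = <a, <b, c>>.\<close>
definition rat_code :: "nat \<Rightarrow> real" where
  "rat_code n = (case prod_decode n of (a, r) \<Rightarrow> (case prod_decode r of (b, c) \<Rightarrow>
      (real a - real b) / (real c + 1)))"

definition left_cut :: "real \<Rightarrow> nat set" where
  "left_cut x = {n. rat_code n < x}"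

definition turing_le :: "real \<Rightarrow> real \<Rightarrow> bool" where
  "turing_le x y \<longleftrightarrow> turing_le_set (left_cut x) (left_cut y)"

definition turing_equiv :: "real \<Rightarrow> real \<Rightarrow> bool" where
  "turing_equiv x y \<longleftrightarrow> turing_le x y \<and> turing_le y x"

definition turing_degree :: "real \<Rightarrow> real set" where
  "turing_degree x = {y. turing_equiv y x}"

definition degree_le :: "real set \<Rightarrow> real set \<Rightarrow> bool" where
  "degree_le d e \<longleftrightarrow> (\<exists>x\<in>d. \<exists>y\<in>e. turing_le x y)"

definition reals_below :: "real set set \<Rightarrow> real set" where
  "reals_below C = {x. \<exists>d\<in>C. \<exists>y\<in>d. turing_le x y}"

definition closed_turing_equiv :: "real set \<Rightarrow> bool" where
  "closed_turing_equiv F \<longleftrightarrow> (\<forall>x\<in>F. \<forall>y. turing_equiv y x \<longrightarrow> y \<in> F)"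

definition is_subfield :: "real set \<Rightarrow> bool" where
  "is_subfield F \<longleftrightarrow> 0 \<in> F \<and> 1 \<in> F \<and> (\<forall>x\<in>F. \<forall>y\<in>F. x + y \<in> F \<and> x * y \<in> F)
     \<and> (\<forall>x\<in>F. - x \<in> F) \<and> (\<forall>x\<in>F. x \<noteq> 0 \<longrightarrow> inverse x \<in> F)"

end

theory Submission
  imports Defs
begin


lemma rc_ext: "rec_in g n f \<Longrightarrow> (\<And>xs. length xs = n \<Longrightarrow> f xs = f' xs) \<Longrightarrow> rec_in g n f'"
  using r_ext by blast

lemma rc_comp1: "rec_in g 1 h \<Longrightarrow> rec_in g n f \<Longrightarrow> rec_in g n (\<lambda>xs. h [f xs])"
proof -
  assume a: "rec_in g 1 h" "rec_in g n f"
  have "rec_in g n (\<lambda>xs. h (map (\<lambda>f. f xs) [f]))"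
    by (rule r_comp[where fs="[f]"]) (use a in auto)
  then show ?thesis by simp
qed

lemma rc_comp2: "rec_in g 2 h \<Longrightarrow> rec_in g n f1 \<Longrightarrow> rec_in g n f2 \<Longrightarrow> rec_in g n (\<lambda>xs. h [f1 xs, f2 xs])"
proof -
  assume a: "rec_in g 2 h" "rec_in g n f1" "rec_in g n f2"
  have "rec_in g n (\<lambda>xs. h (map (\<lambda>f. f xs) [f1, f2]))"
    by (rule r_comp[where fs="[f1, f2]"]) (use a in \<open>auto simp: numeral_2_eq_2\<close>)
  then show ?thesis by simp
qed

lemma rc_comp3: "rec_in g 3 h \<Longrightarrow> rec_in g n f1 \<Longrightarrow> rec_in g n f2 \<Longrightarrow> rec_in g n f3 \<Longrightarrow> rec_in g n (\<lambda>xs. h [f1 xs, f2 xs, f3 xs])"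
proof -
  assume a: "rec_in g 3 h" "rec_in g n f1" "rec_in g n f2" "rec_in g n f3"
  have "rec_in g n (\<lambda>xs. h (map (\<lambda>f. f xs) [f1, f2, f3]))"
    by (rule r_comp[where fs="[f1, f2, f3]"]) (use a in \<open>auto simp: numeral_3_eq_3\<close>)
  then show ?thesis by simp
qed

lemma rc_const: "rec_in g n (\<lambda>_. c)"
proof (induction c)
  case 0
  then show ?case by (rule r_zero)
next
  case (Suc c)
  from rc_comp1[OF r_succ Suc] show ?case by simp
qed

lemma rc_proj: "i < n \<Longrightarrow> rec_in g n (\<lambda>xs. xs ! i)"
  by (rule r_proj)

lemma rc_op1: "rec_in g 1 (\<lambda>ys. h (ys!0)) \<Longrightarrow> rec_in g n f \<Longrightarrow> rec_in g n (\<lambda>xs. h (f xs))"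
  using rc_comp1[of g "\<lambda>ys. h (ys!0)" n f] by simp

lemma rc_op2: "rec_in g 2 (\<lambda>ys. h (ys!0) (ys!1)) \<Longrightarrow> rec_in g n f1 \<Longrightarrow> rec_in g n f2 \<Longrightarrow> rec_in g n (\<lambda>xs. h (f1 xs) (f2 xs))"
  using rc_comp2[of g "\<lambda>ys. h (ys!0) (ys!1)" n f1 f2] by simp

lemma len1: "length xs = 1 \<Longrightarrow> xs = [xs!0]"
  by (cases xs) auto
lemma len2': "length xs = 2 \<Longrightarrow> \<exists>x y. xs = [x, y]"
  by (cases xs; cases "tl xs") (auto simp: numeral_2_eq_2)
lemma len2: "length xs = 2 \<Longrightarrow> xs = [xs!0, xs!1]"
  by (cases xs; cases "tl xs") auto

lemma rc_prim1:
  assumes "rec_in g 2 (\<lambda>ys. s (ys!0) (ys!1))"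
  shows "rec_in g 1 (\<lambda>xs. rec_nat c s (xs!0))"
proof -
  have b: "rec_in g 0 (\<lambda>_. c)" by (rule rc_const)
  have s: "rec_in g (Suc (Suc 0)) (\<lambda>ys. s (ys!0) (ys!1))" using assms by (simp add: numeral_2_eq_2)
  from r_prim[OF b s] have "rec_in g 1 (\<lambda>xs. rec_nat c (\<lambda>k acc. s k acc) (hd xs))" by (simp add: One_nat_def)
  then show ?thesis
    by (rule rc_ext) (metis len1 list.sel(1))
qed

lemma rc_prim2:
  assumes "rec_in g 1 (\<lambda>ys. b (ys!0))" "rec_in g 3 (\<lambda>ys. s (ys!0) (ys!1) (ys!2))"
  shows "rec_in g 2 (\<lambda>xs. rec_nat (b (xs!1)) (\<lambda>k acc. s k acc (xs!1)) (xs!0))"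
proof -
  have b: "rec_in g 1 (\<lambda>ys. b (ys!0))" by (rule assms)
  have s: "rec_in g (Suc (Suc 1)) (\<lambda>ys. s (ys!0) (ys!1) (ys!2))" using assms by (simp add: numeral_3_eq_3)
  from r_prim[OF b s] have "rec_in g 2 (\<lambda>xs. rec_nat (b (tl xs ! 0)) (\<lambda>k acc. s k acc (tl xs ! 0)) (hd xs))" by (simp add: numeral_2_eq_2)
  then show ?thesis
    by (rule rc_ext) (auto dest!: len2')
qed

lemma rec_in_oracle_trans:
  "rec_in g n f \<Longrightarrow> rec_in h 1 (\<lambda>xs. g (hd xs)) \<Longrightarrow> rec_in h n f"
proof (induction rule: rec_in.induct)
  case (r_comp m h' fs n)
  then show ?case by (auto intro: rec_in.r_comp)
next
  case r_succ
  then show ?case using rec_in.r_succ[of h] by simp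
qed (auto intro: rec_in.intros)

lemma rc_oracle: "rec_in g n f \<Longrightarrow> rec_in g n (\<lambda>xs. g (f xs))"
proof -
  assume a: "rec_in g n f"
  have "rec_in g 1 (\<lambda>ys. g (ys!0))"
    by (rule rc_ext[OF r_oracle]) (metis len1 list.sel(1))
  from rc_op1[OF this a] show ?thesis .
qed

lemma rc_suc: "rec_in g n f \<Longrightarrow> rec_in g n (\<lambda>xs. Suc (f xs))"
proof -
  assume a: "rec_in g n f"
  have "rec_in g 1 (\<lambda>ys. Suc (ys!0))"
    by (rule rc_ext[OF r_succ]) (metis len1 list.sel(1))
  from rc_op1[OF this a] show ?thesis .
qed

lemma rc_id1: "rec_in g 1 (\<lambda>ys. ys!0)" by (rule r_proj) simp

lemma add_rec: "rec_nat y (\<lambda>k acc. Suc acc) x = x + y" by (induction x) auto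

lemma rc_add: "rec_in g n f1 \<Longrightarrow> rec_in g n f2 \<Longrightarrow> rec_in g n (\<lambda>xs. f1 xs + f2 xs)"
proof -
  assume a: "rec_in g n f1" "rec_in g n f2"
  have "rec_in g 3 (\<lambda>ys. Suc (ys!1))" by (rule rc_suc, rule r_proj) simp
  from rc_prim2[of g "\<lambda>y. y" "\<lambda>k acc p. Suc acc", OF rc_id1 this]
  have "rec_in g 2 (\<lambda>ys. ys!0 + ys!1)" by (simp add: add_rec)
  from rc_op2[OF this a] show ?thesis .
qed

lemma mult_rec: "rec_nat 0 (\<lambda>k acc. acc + y) x = x * y" by (induction x) auto

lemma rc_mult: "rec_in g n f1 \<Longrightarrow> rec_in g n f2 \<Longrightarrow> rec_in g n (\<lambda>xs. f1 xs * f2 xs)"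
proof -
  assume a: "rec_in g n f1" "rec_in g n f2"
  have "rec_in g 3 (\<lambda>ys. ys!1 + ys!2)" by (rule rc_add; rule r_proj; simp)
  from rc_prim2[of g "\<lambda>y. 0" "\<lambda>k acc p. acc + p", OF rc_const this]
  have "rec_in g 2 (\<lambda>ys. ys!0 * ys!1)" by (simp add: mult_rec)
  from rc_op2[OF this a] show ?thesis .
qed

lemma pred_rec: "rec_nat 0 (\<lambda>k acc. k) x = x - 1" by (cases x) auto

lemma rc_pred: "rec_in g n f \<Longrightarrow> rec_in g n (\<lambda>xs. f xs - 1)"
proof -
  assume a: "rec_in g n f"
  have "rec_in g 2 (\<lambda>ys. ys!0)" by (rule r_proj) simp
  from rc_prim1[where s="\<lambda>k acc. k" and c=0, OF this]
  have "rec_in g 1 (\<lambda>ys. ys!0 - 1)" by (simp add: pred_rec)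
  from rc_op1[OF this a] show ?thesis .
qed

lemma sub_rec: "rec_nat y (\<lambda>k acc. acc - 1) x = y - x" by (induction x) auto
lemma sub_rec': "rec_nat y (\<lambda>k acc. acc - Suc 0) x = y - x" by (induction x) auto

lemma rc_sub: "rec_in g n f1 \<Longrightarrow> rec_in g n f2 \<Longrightarrow> rec_in g n (\<lambda>xs. f1 xs - f2 xs)"
proof -
  assume a: "rec_in g n f1" "rec_in g n f2"
  have "rec_in g 3 (\<lambda>ys. ys!1 - 1)" by (rule rc_pred; rule r_proj; simp)
  from rc_prim2[of g "\<lambda>y. y" "\<lambda>k acc p. acc - 1", OF rc_id1 this]
  have "rec_in g 2 (\<lambda>ys. ys!1 - ys!0)" by (simp add: sub_rec sub_rec')
  from rc_op2[OF this a(2) a(1)] show ?thesis .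
qed

lemma pow_rec': "rec_nat (Suc 0) (\<lambda>k. (*) c) x = c ^ x" by (induction x) auto
lemma pow_rec: "rec_nat 1 (\<lambda>k acc. c * acc) x = c ^ x" by (induction x) auto

lemma rc_pow: "rec_in g n f \<Longrightarrow> rec_in g n (\<lambda>xs. c ^ f xs)"
proof -
  assume a: "rec_in g n f"
  have "rec_in g 2 (\<lambda>ys. c * ys!1)" by (rule rc_mult; (rule rc_const | rule r_proj); simp)
  from rc_prim1[where s="\<lambda>k acc. c * acc" and c=1, OF this]
  have "rec_in g 1 (\<lambda>ys. c ^ ys!0)" by (simp add: pow_rec pow_rec')
  from rc_op1[OF this a] show ?thesis .
qed

lemma tri_rec': "rec_nat 0 (\<lambda>k acc. Suc (acc + k)) x = triangle x" by (induction x) auto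
lemma tri_rec: "rec_nat 0 (\<lambda>k acc. acc + Suc k) x = triangle x" by (induction x) auto

lemma rc_tri: "rec_in g n f \<Longrightarrow> rec_in g n (\<lambda>xs. triangle (f xs))"
proof -
  assume a: "rec_in g n f"
  have "rec_in g 2 (\<lambda>ys. ys!1 + Suc (ys!0))" by (intro rc_add rc_suc r_proj) simp_all
  from rc_prim1[where s="\<lambda>k acc. acc + Suc k" and c=0, OF this]
  have "rec_in g 1 (\<lambda>ys. triangle (ys!0))" by (simp add: tri_rec tri_rec')
  from rc_op1[OF this a] show ?thesis .
qed

lemma rc_pe: "rec_in g n f1 \<Longrightarrow> rec_in g n f2 \<Longrightarrow> rec_in g n (\<lambda>xs. prod_encode (f1 xs, f2 xs))"
  unfolding prod_encode_def by (simp add: rc_add rc_tri)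

lemma rc_bool_less: "rec_in g n f1 \<Longrightarrow> rec_in g n f2 \<Longrightarrow> rec_in g n (\<lambda>xs. of_bool (f1 xs < f2 xs))"
proof -
  assume a: "rec_in g n f1" "rec_in g n f2"
  have "rec_in g n (\<lambda>xs. 1 - (1 - (f2 xs - f1 xs)))" by (intro rc_sub rc_const a)
  moreover have "(\<lambda>xs. 1 - (1 - (f2 xs - f1 xs))) = (\<lambda>xs. of_bool (f1 xs < f2 xs))" by auto
  ultimately show ?thesis by simp
qed

lemma rc_bool_eq: "rec_in g n f1 \<Longrightarrow> rec_in g n f2 \<Longrightarrow> rec_in g n (\<lambda>xs. of_bool (f1 xs = f2 xs))"
proof -
  assume a: "rec_in g n f1" "rec_in g n f2"
  have "rec_in g n (\<lambda>xs. 1 - ((f1 xs - f2 xs) + (f2 xs - f1 xs)))" by (intro rc_sub rc_add rc_const a)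
  moreover have "(\<lambda>xs. 1 - ((f1 xs - f2 xs) + (f2 xs - f1 xs))) = (\<lambda>xs. of_bool (f1 xs = f2 xs))" by auto
  ultimately show ?thesis by simp
qed

lemma rc_bool_not: "rec_in g n (\<lambda>xs. of_bool (P xs)) \<Longrightarrow> rec_in g n (\<lambda>xs. of_bool (\<not> P xs))"
proof -
  assume a: "rec_in g n (\<lambda>xs. of_bool (P xs))"
  have "rec_in g n (\<lambda>xs. 1 - of_bool (P xs))" by (intro rc_sub rc_const a)
  moreover have "(\<lambda>xs. 1 - of_bool (P xs)) = (\<lambda>xs. (of_bool (\<not> P xs) :: nat))" by auto
  ultimately show ?thesis by simp
qed

lemma rc_bool_and: "rec_in g n (\<lambda>xs. of_bool (P xs)) \<Longrightarrow> rec_in g n (\<lambda>xs. of_bool (Q xs)) \<Longrightarrow> rec_in g n (\<lambda>xs. of_bool (P xs \<and> Q xs))"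
proof -
  assume a: "rec_in g n (\<lambda>xs. of_bool (P xs))" "rec_in g n (\<lambda>xs. of_bool (Q xs))"
  have "rec_in g n (\<lambda>xs. of_bool (P xs) * of_bool (Q xs))" by (intro rc_mult a)
  moreover have "(\<lambda>xs. of_bool (P xs) * of_bool (Q xs)) = (\<lambda>xs. (of_bool (P xs \<and> Q xs) :: nat))" by auto
  ultimately show ?thesis by simp
qed

lemma rc_bool_or: "rec_in g n (\<lambda>xs. of_bool (P xs)) \<Longrightarrow> rec_in g n (\<lambda>xs. of_bool (Q xs)) \<Longrightarrow> rec_in g n (\<lambda>xs. of_bool (P xs \<or> Q xs))"
proof -
  assume a: "rec_in g n (\<lambda>xs. of_bool (P xs))" "rec_in g n (\<lambda>xs. of_bool (Q xs))"
  have "rec_in g n (\<lambda>xs. of_bool (\<not> (\<not> P xs \<and> \<not> Q xs)))" by (intro rc_bool_not rc_bool_and a)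
  then show ?thesis by simp
qed

lemma rc_bool_le: "rec_in g n f1 \<Longrightarrow> rec_in g n f2 \<Longrightarrow> rec_in g n (\<lambda>xs. of_bool (f1 xs \<le> f2 xs))"
proof -
  assume a: "rec_in g n f1" "rec_in g n f2"
  have "rec_in g n (\<lambda>xs. of_bool (\<not> f2 xs < f1 xs))" by (intro rc_bool_not rc_bool_less a)
  then show ?thesis by (simp add: not_less)
qed

lemma rc_if: "rec_in g n (\<lambda>xs. of_bool (P xs)) \<Longrightarrow> rec_in g n f1 \<Longrightarrow> rec_in g n f2 \<Longrightarrow> rec_in g n (\<lambda>xs. if P xs then f1 xs else f2 xs)"
proof -
  assume a: "rec_in g n (\<lambda>xs. of_bool (P xs))" "rec_in g n f1" "rec_in g n f2"
  have "rec_in g n (\<lambda>xs. of_bool (P xs) * f1 xs + (1 - of_bool (P xs)) * f2 xs)" by (intro rc_mult rc_add rc_sub rc_const a)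
  moreover have "(\<lambda>xs. of_bool (P xs) * f1 xs + (1 - of_bool (P xs)) * f2 xs) = (\<lambda>xs. if P xs then f1 xs else f2 xs)" by auto
  ultimately show ?thesis by simp
qed

lemma rc_search:
  assumes "rec_in g 2 (\<lambda>ys. of_bool (P (ys!0) (ys!1)))" and "\<And>m. \<exists>k. P k m"
  shows "rec_in g 1 (\<lambda>ys. LEAST k. P k (ys!0))"
proof -
  have p: "rec_in g (Suc 1) (\<lambda>ys. of_bool (\<not> P (ys!0) (ys!1)))" using rc_bool_not[OF assms(1)] by (simp add: numeral_2_eq_2)
  have "\<forall>xs. length xs = 1 \<longrightarrow> (\<exists>y. (of_bool (\<not> P ((y#xs)!0) ((y#xs)!1)) :: nat) = 0)"
    using assms(2) by auto
  from r_min[OF p this] show ?thesis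
    by (rule rc_ext) simp
qed



definition kdec :: "nat \<Rightarrow> nat" where "kdec m = (LEAST k. m < triangle (Suc k))"

lemma kdec_props: "m < triangle (Suc (kdec m))" "triangle (kdec m) \<le> m"
proof -
  have ex: "\<exists>k. m < triangle (Suc k)"
    by (rule exI[of _ m]) (induction m, auto)
  show "m < triangle (Suc (kdec m))" unfolding kdec_def by (rule LeastI_ex[OF ex])
  show "triangle (kdec m) \<le> m"
  proof (cases "kdec m")
    case 0 then show ?thesis by simp
  next
    case (Suc j)
    then have "j < kdec m" by simp
    then have "\<not> m < triangle (Suc j)" unfolding kdec_def by (rule not_less_Least)
    then show ?thesis using Suc by simp
  qed
qed

lemma prod_decode_kdec: "prod_decode m = (m - triangle (kdec m), kdec m - (m - triangle (kdec m)))"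
proof -
  have "prod_encode (m - triangle (kdec m), kdec m - (m - triangle (kdec m))) = m"
    using kdec_props[of m] by (simp add: prod_encode_def)
  then show ?thesis by (metis prod_encode_inverse)
qed

lemma tri_ge: "k \<le> triangle k" by (induction k) auto

lemma rc_kdec: "rec_in g n f \<Longrightarrow> rec_in g n (\<lambda>xs. kdec (f xs))"
proof -
  assume a: "rec_in g n f"
  have "rec_in g 2 (\<lambda>ys. of_bool (ys!1 < triangle (Suc (ys!0))))"
    by (intro rc_bool_less rc_tri rc_suc r_proj) simp_all
  moreover have ex: "\<And>m. \<exists>k. m < triangle (Suc k)"
  proof -
    fix m
    have "Suc m \<le> triangle (Suc m)" by (rule tri_ge)
    then show "\<exists>k. m < triangle (Suc k)" by (intro exI[of _ m]) simp
  qed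
  ultimately have "rec_in g 1 (\<lambda>ys. LEAST k. ys!0 < triangle (Suc k))"
    by (rule rc_search[where P="\<lambda>k m. m < triangle (Suc k)"])
  then have "rec_in g 1 (\<lambda>ys. kdec (ys!0))" by (simp add: kdec_def)
  from rc_op1[OF this a] show ?thesis .
qed

lemma rc_dfst: "rec_in g n f \<Longrightarrow> rec_in g n (\<lambda>xs. fst (prod_decode (f xs)))"
  by (simp add: prod_decode_kdec rc_sub rc_tri rc_kdec)

lemma rc_dsnd: "rec_in g n f \<Longrightarrow> rec_in g n (\<lambda>xs. snd (prod_decode (f xs)))"
  by (simp add: prod_decode_kdec rc_sub rc_tri rc_kdec)

lemma div2_least: "(LEAST d. k < 2 * Suc d) = k div 2"
  by (rule Least_equality) auto

lemma rc_div2: "rec_in g n f \<Longrightarrow> rec_in g n (\<lambda>xs. f xs div 2)"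
proof -
  assume a: "rec_in g n f"
  have "rec_in g 2 (\<lambda>ys. of_bool (ys!1 < 2 * Suc (ys!0)))"
    by (intro rc_bool_less rc_mult rc_const rc_suc r_proj) simp_all
  moreover have "\<And>k. \<exists>d. k < 2 * Suc d" by (rule_tac x=k in exI) simp
  ultimately have "rec_in g 1 (\<lambda>ys. LEAST d. ys!0 < 2 * Suc d)"
    by (rule rc_search[where P="\<lambda>d k. k < 2 * Suc d"])
  then have "rec_in g 1 (\<lambda>ys. ys!0 div 2)" by (simp only: div2_least)
  from rc_op1[OF this a] show ?thesis .
qed

definition cs :: "nat set \<Rightarrow> nat \<Rightarrow> nat" where "cs A = (\<lambda>k. of_bool (k \<in> A))"

lemma tle_def2: "turing_le_set A B \<longleftrightarrow> rec_in (cs B) 1 (\<lambda>ys. cs A (ys!0))"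
proof -
  have "turing_le_set A B \<longleftrightarrow> rec_in (cs B) 1 (\<lambda>ys. cs A (hd ys))"
    by (simp add: turing_le_set_def cs_def)
  also have "\<dots> \<longleftrightarrow> rec_in (cs B) 1 (\<lambda>ys. cs A (ys!0))"
    by (metis (no_types, lifting) len1 list.sel(1) rc_ext)
  finally show ?thesis .
qed

lemma tle_refl: "turing_le_set A A"
  unfolding turing_le_set_def using r_oracle[of "\<lambda>k. of_bool (k \<in> A)"] by simp

lemma tle_trans: "turing_le_set A B \<Longrightarrow> turing_le_set B C \<Longrightarrow> turing_le_set A C"
  unfolding turing_le_set_def by (rule rec_in_oracle_trans)

lemma tle_use: "turing_le_set A B \<Longrightarrow> rec_in (cs B) n f \<Longrightarrow> rec_in (cs B) n (\<lambda>xs. cs A (f xs))"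
  unfolding tle_def2 by (rule rc_op1)

definition J :: "nat set \<Rightarrow> nat set \<Rightarrow> nat set" where
  "J X Y = {k. if even k then k div 2 \<in> X else k div 2 \<in> Y}"

lemma ev2: "((k::nat) = 2 * (k div 2)) = even k" by presburger

lemma J_le: "turing_le_set X Z \<Longrightarrow> turing_le_set Y Z \<Longrightarrow> turing_le_set (J X Y) Z"
proof -
  assume a: "turing_le_set X Z" "turing_le_set Y Z"
  have i: "rec_in (cs Z) 1 (\<lambda>ys. ys!0 div 2)" by (intro rc_div2 r_proj) simp
  have "rec_in (cs Z) 1 (\<lambda>ys. if ys!0 = 2 * (ys!0 div 2) then cs X (ys!0 div 2) else cs Y (ys!0 div 2))"
    by (intro rc_if rc_bool_eq rc_mult rc_const r_proj tle_use[OF a(1) i] tle_use[OF a(2) i] rc_div2) simp_all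
  then show ?thesis unfolding tle_def2
    by (rule rc_ext) (simp add: cs_def J_def ev2)
qed

lemma le_J1: "turing_le_set X (J X Y)"
proof -
  have "rec_in (cs (J X Y)) 1 (\<lambda>ys. cs (J X Y) (2 * ys!0))"
    by (intro rc_oracle[unfolded] rc_mult rc_const r_proj) simp
  then show ?thesis unfolding tle_def2
    by (rule rc_ext) (auto simp: cs_def J_def)
qed

lemma le_J2: "turing_le_set Y (J X Y)"
proof -
  have "rec_in (cs (J X Y)) 1 (\<lambda>ys. cs (J X Y) (Suc (2 * ys!0)))"
    by (intro rc_oracle[unfolded] rc_suc rc_mult rc_const r_proj) simp
  then show ?thesis unfolding tle_def2
    by (rule rc_ext) (auto simp: cs_def J_def)
qed

lemma empty_le: "turing_le_set {} Z"
proof -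
  have e: "cs {} = (\<lambda>_. 0)" by (auto simp: cs_def)
  show ?thesis unfolding tle_def2 e by (rule rc_const)
qed



definition tS :: "nat set \<Rightarrow> nat \<Rightarrow> real" where
  "tS S n = (if n \<in> S then (1/4)^(Suc n) else 0)"

definition code :: "nat set \<Rightarrow> real" where "code S = suminf (tS S)"

primrec npre :: "nat set \<Rightarrow> nat \<Rightarrow> nat" where
  "npre S 0 = 0"
| "npre S (Suc k) = 4 * npre S k + of_bool (k \<in> S)"

lemma geo_sums: "(\<lambda>n. (1/4::real)^(Suc (n + k))) sums ((1/4)^k / 3)"
proof -
  have "(\<lambda>n. (1/4::real)^n) sums (1 / (1 - 1/4))" by (rule geometric_sums) simp
  then have "(\<lambda>n. (1/4::real)^(Suc k) * (1/4)^n) sums ((1/4)^(Suc k) * (1 / (1 - 1/4)))"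
    by (rule sums_mult)
  moreover have "(\<lambda>n. (1/4::real)^(Suc k) * (1/4)^n) = (\<lambda>n. (1/4::real)^(Suc (n + k)))"
    by (auto simp: power_add[symmetric] add.commute)
  moreover have "(1/4::real)^(Suc k) * (1 / (1 - 1/4)) = (1/4)^k / 3" by simp
  ultimately show ?thesis by simp
qed

lemma tS_nonneg: "0 \<le> tS S n" by (simp add: tS_def)
lemma tS_le: "tS S n \<le> (1/4)^(Suc n)" by (simp add: tS_def)

lemma tS_norm: "norm (tS S (n + k)) \<le> (1/4)^(Suc (n + k))"
  using tS_le[of S "n+k"] tS_nonneg[of S "n+k"] by simp

lemma summable_tS_shift: "summable (\<lambda>n. tS S (n + k))"
  by (rule summable_comparison_test[OF _ sums_summable[OF geo_sums[of k]]])
     (use tS_norm in blast)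

lemma summable_tS: "summable (tS S)"
  using summable_tS_shift[of S 0] by simp

lemma tail_bounds: "0 \<le> (\<Sum>n. tS S (n + k))" "(\<Sum>n. tS S (n + k)) \<le> (1/4)^k / 3"
proof -
  show "0 \<le> (\<Sum>n. tS S (n + k))" by (rule suminf_nonneg[OF summable_tS_shift]) (simp add: tS_nonneg)
  have "(\<Sum>n. tS S (n + k)) \<le> (\<Sum>n. (1/4::real)^(Suc (n + k)))"
    by (rule suminf_le[OF _ summable_tS_shift sums_summable[OF geo_sums[of k]]]) (use tS_le in \<open>auto simp del: power_Suc\<close>)
  then show "(\<Sum>n. tS S (n + k)) \<le> (1/4)^k / 3" using sums_unique[OF geo_sums[of k]] by simp
qed

lemma npre_eq: "real (npre S k) / 4^k = (\<Sum>n<k. tS S n)"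
proof (induction k)
  case 0 then show ?case by simp
next
  case (Suc k)
  have "real (npre S (Suc k)) / 4^Suc k = real (npre S k) / 4^k + tS S k"
    by (simp add: tS_def field_simps power_one_over)
  then show ?case using Suc by simp
qed

lemma code_split: "code S = real (npre S k) / 4^k + (\<Sum>n. tS S (n + k))"
  unfolding code_def npre_eq using suminf_split_initial_segment[OF summable_tS, of S k] by simp

lemma code_lo: "real (npre S k) / 4^k \<le> code S"
  using code_split[of S k] tail_bounds[of S k] by simp

lemma code_hi: "code S \<le> real (npre S k) / 4^k + (1/4)^k / 3"
  using code_split[of S k] tail_bounds[of S k] by simp

definition qk :: "nat \<Rightarrow> nat \<Rightarrow> nat" where
  "qk N k = prod_encode (8*N+1, prod_encode (0, 2*4^(Suc k) - 1))"

lemma rat_code_qk: "rat_code (qk N k) = real (8*N+1) / (2*4^(Suc k))"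
proof -
  have "(1::nat) \<le> 2*4^(Suc k)" by simp
  then have "real (2*4^(Suc k) - 1) + 1 = 2*4^(Suc k)" by (simp add: of_nat_diff)
  then show ?thesis unfolding rat_code_def qk_def by simp
qed

lemma digit: "qk (npre S k) k \<in> left_cut (code S) \<longleftrightarrow> k \<in> S"
proof -
  define N where "N = npre S k"
  define v :: real where "v = 4^Suc k"
  have v: "v > 0" unfolding v_def by simp
  have lo: "real (npre S (Suc k)) / v \<le> code S" unfolding v_def by (rule code_lo)
  have hi: "code S \<le> real (npre S (Suc k)) / v + 1 / (3 * v)"
    using code_hi[of S "Suc k"] unfolding v_def by (simp add: power_one_over)
  have q: "rat_code (qk N k) = real (8*N+1) / (2*v)" unfolding v_def by (rule rat_code_qk)
  show ?thesis
  proof (cases "k \<in> S")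
    case True
    then have e: "npre S (Suc k) = 4*N+1" unfolding N_def by simp
    have "real (4*N+1) / v \<le> code S" using lo unfolding e .
    moreover have "real (8*N+1) / (2*v) < real (4*N+1) / v" using v by (simp add: field_simps)
    ultimately show ?thesis using True q unfolding left_cut_def N_def by simp
  next
    case False
    then have e: "npre S (Suc k) = 4*N" unfolding N_def by simp
    have "code S \<le> real (4*N) / v + 1 / (3 * v)" using hi unfolding e .
    moreover have "real (4*N) / v + 1 / (3 * v) < real (8*N+1) / (2*v)" using v by (simp add: field_simps)
    ultimately show ?thesis using False q unfolding left_cut_def N_def by simp
  qed
qed

lemma rc_qk: "rec_in g n f1 \<Longrightarrow> rec_in g n f2 \<Longrightarrow> rec_in g n (\<lambda>xs. qk (f1 xs) (f2 xs))"
  unfolding qk_def by (intro rc_pe rc_const rc_add rc_mult rc_sub rc_pow rc_suc) auto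

definition mrec :: "(nat \<Rightarrow> nat) \<Rightarrow> nat \<Rightarrow> nat" where
  "mrec g k = rec_nat 0 (\<lambda>k acc. 4*acc + g (qk acc k)) k"

lemma mrec_npre: "mrec (cs (left_cut (code S))) k = npre S k"
proof (induction k)
  case 0 then show ?case by (simp add: mrec_def)
next
  case (Suc k)
  have "mrec (cs (left_cut (code S))) (Suc k) = 4 * mrec (cs (left_cut (code S))) k + cs (left_cut (code S)) (qk (mrec (cs (left_cut (code S))) k) k)"
    by (simp add: mrec_def)
  also have "\<dots> = 4 * npre S k + of_bool (k \<in> S)" using Suc digit[of S k] by (simp add: cs_def)
  finally show ?case by simp
qed

lemma rc_mrec: "rec_in g 1 (\<lambda>ys. mrec g (ys!0))"
proof -
  have "rec_in g 2 (\<lambda>ys. 4 * ys!1 + g (qk (ys!1) (ys!0)))"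
    by (intro rc_add rc_mult rc_const rc_oracle rc_qk r_proj) auto
  from rc_prim1[where s="\<lambda>k acc. 4*acc + g (qk acc k)" and c=0, OF this]
  show ?thesis unfolding mrec_def .
qed

lemma S_le_code: "turing_le_set S (left_cut (code S))"
proof -
  let ?g = "cs (left_cut (code S))"
  have "rec_in ?g 1 (\<lambda>ys. ?g (qk (mrec ?g (ys!0)) (ys!0)))"
    by (intro rc_oracle rc_qk rc_mrec r_proj) auto
  then show ?thesis unfolding tle_def2
    by (rule rc_ext) (simp only: mrec_npre, simp add: digit cs_def)
qed

definition dA :: "nat \<Rightarrow> nat" where "dA m = fst (prod_decode m)"
definition dB :: "nat \<Rightarrow> nat" where "dB m = fst (prod_decode (snd (prod_decode m)))"
definition dC :: "nat \<Rightarrow> nat" where "dC m = snd (prod_decode (snd (prod_decode m)))"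

lemma rat_code_d: "rat_code m = (real (dA m) - real (dB m)) / (real (dC m) + 1)"
  unfolding rat_code_def dA_def dB_def dC_def by (simp add: case_prod_beta)

lemma rc_dA: "rec_in g n f \<Longrightarrow> rec_in g n (\<lambda>xs. dA (f xs))"
  unfolding dA_def by (rule rc_dfst)
lemma rc_dB: "rec_in g n f \<Longrightarrow> rec_in g n (\<lambda>xs. dB (f xs))"
  unfolding dB_def by (intro rc_dfst rc_dsnd)
lemma rc_dC: "rec_in g n f \<Longrightarrow> rec_in g n (\<lambda>xs. dC (f xs))"
  unfolding dC_def by (intro rc_dsnd)

lemma npre_rec: "rec_nat 0 (\<lambda>k acc. 4*acc + cs S k) k = npre S k"
  by (induction k) (auto simp: cs_def)

lemma rc_npre: "rec_in (cs S) n f \<Longrightarrow> rec_in (cs S) n (\<lambda>xs. npre S (f xs))"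
proof -
  assume a: "rec_in (cs S) n f"
  have "rec_in (cs S) 2 (\<lambda>ys. 4 * ys!1 + cs S (ys!0))"
    by (intro rc_add rc_mult rc_const rc_oracle r_proj) auto
  from rc_prim1[where s="\<lambda>k acc. 4*acc + cs S k" and c=0, OF this]
  have "rec_in (cs S) 1 (\<lambda>ys. npre S (ys!0))" unfolding npre_rec .
  from rc_op1[OF this a] show ?thesis .
qed

lemma yes_iff:
  fixes a b c N w :: nat assumes "w > 0"
  shows "(real a - real b) / (real c + 1) < real N / real w \<longleftrightarrow> a*w < N*(c+1) + b*w"
proof -
  have "(real a - real b) / (real c + 1) < real N / real w \<longleftrightarrow> (real a - real b) * real w < real N * (real c + 1)"
    using assms by (simp add: field_simps)
  also have "\<dots> \<longleftrightarrow> real (a*w) < real (N*(c+1) + b*w)" by (simp add: algebra_simps)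
  also have "\<dots> \<longleftrightarrow> a*w < N*(c+1) + b*w" by (rule of_nat_less_iff)
  finally show ?thesis .
qed

lemma no_iff:
  fixes a b c N w :: nat assumes "w > 0"
  shows "real N / real w + 1 / (3 * real w) \<le> (real a - real b) / (real c + 1) \<longleftrightarrow> (3*N+1)*(c+1) + 3*b*w \<le> 3*a*w"
proof -
  have "real N / real w + 1 / (3 * real w) \<le> (real a - real b) / (real c + 1) \<longleftrightarrow> (3 * real N + 1) * (real c + 1) \<le> 3 * (real a - real b) * real w"
    using assms by (simp add: field_simps)
  also have "\<dots> \<longleftrightarrow> real ((3*N+1)*(c+1) + 3*b*w) \<le> real (3*a*w)" by (simp add: algebra_simps)
  also have "\<dots> \<longleftrightarrow> (3*N+1)*(c+1) + 3*b*w \<le> 3*a*w" by (rule of_nat_le_iff)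
  finally show ?thesis .
qed

lemma esc_iff:
  fixes a b c a0 b0 c0 :: nat
  shows "(real a - real b) / (real c + 1) = (real a0 - real b0) / (real c0 + 1) \<longleftrightarrow> a*(c0+1) + b0*(c+1) = a0*(c+1) + b*(c0+1)"
proof -
  have "(real a - real b) / (real c + 1) = (real a0 - real b0) / (real c0 + 1) \<longleftrightarrow> (real a - real b) * (real c0 + 1) = (real a0 - real b0) * (real c + 1)"
    by (simp add: field_simps)
  also have "\<dots> \<longleftrightarrow> real (a*(c0+1) + b0*(c+1)) = real (a0*(c+1) + b*(c0+1))" by (simp add: algebra_simps)
  also have "\<dots> \<longleftrightarrow> a*(c0+1) + b0*(c+1) = a0*(c+1) + b*(c0+1)" by (rule of_nat_eq_iff)
  finally show ?thesis .
qed

definition yes :: "nat set \<Rightarrow> nat \<Rightarrow> nat \<Rightarrow> bool" where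
  "yes S k m \<longleftrightarrow> dA m * 4^k < npre S k * (dC m + 1) + dB m * 4^k"
definition no :: "nat set \<Rightarrow> nat \<Rightarrow> nat \<Rightarrow> bool" where
  "no S k m \<longleftrightarrow> (3 * npre S k + 1) * (dC m + 1) + 3 * dB m * 4^k \<le> 3 * dA m * 4^k"
definition esc :: "nat \<Rightarrow> nat \<Rightarrow> nat \<Rightarrow> nat \<Rightarrow> bool" where
  "esc a0 b0 c0 m \<longleftrightarrow> dA m * (c0+1) + b0 * (dC m + 1) = a0 * (dC m + 1) + dB m * (c0+1)"

lemma yes_real: "yes S k m \<longleftrightarrow> rat_code m < real (npre S k) / 4^k"
  using yes_iff[of "4^k" "dA m" "dB m" "dC m" "npre S k"] unfolding yes_def rat_code_d by simp

lemma no_real: "no S k m \<longleftrightarrow> real (npre S k) / 4^k + (1/4)^k / 3 \<le> rat_code m"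
  using no_iff[of "4^k" "npre S k" "dA m" "dB m" "dC m"] unfolding no_def rat_code_d
  by (simp add: power_one_over mult.commute)

lemma esc_real: "esc a0 b0 c0 m \<longleftrightarrow> rat_code m = (real a0 - real b0) / (real c0 + 1)"
  using esc_iff[of "dA m" "dB m" "dC m" a0 b0 c0] unfolding esc_def rat_code_d by simp

lemma code_le_S: "turing_le_set (left_cut (code S)) S"
proof -
  define t0 where "t0 = (SOME t. code S = (real (fst t) - real (fst (snd t))) / (real (snd (snd t)) + 1))"
  define a0 where "a0 = fst t0"
  define b0 where "b0 = fst (snd t0)"
  define c0 where "c0 = snd (snd t0)"
  define q0 where "q0 = (real a0 - real b0) / (real c0 + 1)"
  define e0 :: nat where "e0 = of_bool (q0 < code S)"
  define P where "P = (\<lambda>k m. yes S k m \<or> no S k m \<or> esc a0 b0 c0 m)"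
  have ex: "\<exists>k. P k m" for m
  proof -
    let ?q = "rat_code m"
    consider "?q < code S" | "?q > code S" | "?q = code S" by linarith
    then show ?thesis
    proof cases
      case 1
      obtain k where k: "(1/4::real)^k < code S - ?q" using real_arch_pow_inv[of "code S - ?q" "1/4"] 1 by auto
      have "0 \<le> (1/4::real)^k" by simp
      then have "?q < real (npre S k) / 4^k" using code_hi[of S k] k by linarith
      then have "yes S k m" by (simp add: yes_real)
      then show ?thesis unfolding P_def by blast
    next
      case 2
      obtain k where k: "(1/4::real)^k < ?q - code S" using real_arch_pow_inv[of "?q - code S" "1/4"] 2 by auto
      have "0 \<le> (1/4::real)^k" by simp
      then have "real (npre S k) / 4^k + (1/4)^k / 3 \<le> ?q" using code_lo[of S k] k by linarith
      then have "no S k m" by (simp add: no_real)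
      then show ?thesis unfolding P_def by blast
    next
      case 3
      have "\<exists>t. code S = (real (fst t) - real (fst (snd t))) / (real (snd (snd t)) + 1)"
        by (rule exI[of _ "(dA m, dB m, dC m)"]) (simp add: 3[symmetric] rat_code_d)
      then have "code S = q0" unfolding q0_def a0_def b0_def c0_def t0_def by (rule someI_ex)
      then have "esc a0 b0 c0 m" using 3 by (simp add: esc_real q0_def)
      then show ?thesis unfolding P_def by blast
    qed
  qed
  have p: "rec_in (cs S) 2 (\<lambda>ys. of_bool (P (ys!0) (ys!1)))"
    unfolding P_def yes_def no_def esc_def
    by (intro rc_bool_or rc_bool_less rc_bool_le rc_bool_eq rc_const rc_add rc_mult rc_pow rc_npre rc_dA rc_dB rc_dC r_proj) auto
  have srch: "rec_in (cs S) 1 (\<lambda>ys. LEAST k. P k (ys!0))"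
    by (rule rc_search[where P=P, OF p ex])
  have "rec_in (cs S) 1 (\<lambda>ys. if esc a0 b0 c0 (ys!0) then e0 else of_bool (yes S (LEAST k. P k (ys!0)) (ys!0)))"
    unfolding esc_def yes_def
    by (intro rc_if rc_bool_less rc_bool_eq rc_const rc_add rc_mult rc_pow rc_npre rc_dA rc_dB rc_dC r_proj srch) auto
  moreover have "(if esc a0 b0 c0 m then e0 else of_bool (yes S (LEAST k. P k m) m)) = cs (left_cut (code S)) m" for m
  proof (cases "esc a0 b0 c0 m")
    case True
    then have "rat_code m = q0" by (simp add: esc_real q0_def)
    then show ?thesis using True by (simp add: e0_def cs_def left_cut_def)
  next
    case False
    define k where "k = (LEAST k. P k m)"
    have "P k m" unfolding k_def using ex by (rule LeastI_ex)
    with False have yn: "yes S k m \<or> no S k m" unfolding P_def by blast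
    have "yes S k m \<longleftrightarrow> rat_code m < code S"
    proof
      assume "yes S k m"
      then show "rat_code m < code S" using code_lo[of S k] by (simp add: yes_real)
    next
      assume a: "rat_code m < code S"
      show "yes S k m"
      proof (rule ccontr)
        assume "\<not> yes S k m"
        with yn have "no S k m" by blast
        then have "real (npre S k) / 4^k + (1/4)^k / 3 \<le> rat_code m" by (simp add: no_real)
        then show False using code_hi[of S k] a by linarith
      qed
    qed
    then show ?thesis using False by (simp add: k_def cs_def left_cut_def)
  qed
  ultimately show ?thesis unfolding tle_def2
    by (rule rc_ext)
qed



lemma tS_union: "A \<inter> B = {} \<Longrightarrow> tS (A \<union> B) n = tS A n + tS B n"
  by (auto simp: tS_def)

lemma code_union: "A \<inter> B = {} \<Longrightarrow> code (A \<union> B) = code A + code B"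
proof -
  assume d: "A \<inter> B = {}"
  have "tS (A \<union> B) = (\<lambda>n. tS A n + tS B n)" using tS_union[OF d] by auto
  then show ?thesis unfolding code_def using suminf_add[OF summable_tS summable_tS, of A B] by simp
qed

lemma J_split: "J X Y = J X {} \<union> J {} Y" "J X {} \<inter> J {} Y = {}"
  by (auto simp: J_def)

lemma code_J: "code (J X Y) = code (J X {}) + code (J {} Y)"
  by (subst J_split(1)) (rule code_union[OF J_split(2)])

lemma tl_trans: "turing_le x y \<Longrightarrow> turing_le y z \<Longrightarrow> turing_le x z"
  unfolding turing_le_def by (rule tle_trans)

lemma tl_refl: "turing_le x x"
  unfolding turing_le_def by (rule tle_refl)

lemma in_F_equiv:
  assumes "closed_turing_equiv F" "x \<in> F"
    "turing_le_set (left_cut y) (left_cut x)" "turing_le_set (left_cut x) (left_cut y)"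
  shows "y \<in> F"
  using assms unfolding closed_turing_equiv_def turing_equiv_def turing_le_def by blast

lemma code_in_F:
  assumes "closed_turing_equiv F" "x \<in> F"
    "turing_le_set T (left_cut x)" "turing_le_set (left_cut x) T"
  shows "code T \<in> F"
  by (rule in_F_equiv[OF assms(1,2) tle_trans[OF code_le_S assms(3)] tle_trans[OF assms(4) S_le_code]])

lemma down:
  assumes F: "is_subfield F" "closed_turing_equiv F" and y: "y \<in> F" and xy: "turing_le x y"
  shows "x \<in> F"
proof -
  let ?X = "left_cut x" and ?Y = "left_cut y"
  have XY: "turing_le_set ?X ?Y" using xy unfolding turing_le_def .
  have u: "code (J ?Y ?X) \<in> F"
    by (rule code_in_F[OF F(2) y J_le[OF tle_refl XY] le_J1])
  have v: "code (J ?Y {}) \<in> F"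
    by (rule code_in_F[OF F(2) y J_le[OF tle_refl empty_le] le_J1])
  have "code (J {} ?X) = code (J ?Y ?X) + - code (J ?Y {})"
    using code_J[of ?Y ?X] by simp
  also have "\<dots> \<in> F" using u v F(1) unfolding is_subfield_def by blast
  finally have w: "code (J {} ?X) \<in> F" .
  show ?thesis
    by (rule in_F_equiv[OF F(2) w tle_trans[OF le_J2 S_le_code] tle_trans[OF code_le_S J_le[OF empty_le tle_refl]]])
qed

lemma up:
  assumes F: "is_subfield F" "closed_turing_equiv F" and x: "x \<in> F" and y: "y \<in> F"
  shows "\<exists>z\<in>F. turing_le x z \<and> turing_le y z"
proof -
  let ?X = "left_cut x" and ?Y = "left_cut y"
  have u: "code (J ?X {}) \<in> F"
    by (rule code_in_F[OF F(2) x J_le[OF tle_refl empty_le] le_J1])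
  have v: "code (J {} ?Y) \<in> F"
    by (rule code_in_F[OF F(2) y J_le[OF empty_le tle_refl] le_J2])
  have "code (J ?X {}) + code (J {} ?Y) \<in> F" using u v F(1) unfolding is_subfield_def by blast
  then have z: "code (J ?X ?Y) \<in> F" using code_J[of ?X ?Y] by simp
  have "turing_le x (code (J ?X ?Y))" unfolding turing_le_def
    by (rule tle_trans[OF le_J1 S_le_code])
  moreover have "turing_le y (code (J ?X ?Y))" unfolding turing_le_def
    by (rule tle_trans[OF le_J2 S_le_code])
  ultimately show ?thesis using z by blast
qed

theorem mainTheorem19:
  fixes F :: "real set"
  assumes "is_subfield F" and "countable F" and "closed_turing_equiv F"
  shows "\<exists>C :: real set set. C \<subseteq> range turing_degree
           \<and> (\<forall>d\<in>C. \<forall>e\<in>C. degree_le d e \<or> degree_le e d)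
           \<and> F = reals_below C"
proof -
  have ne: "F \<noteq> {}" using assms(1) unfolding is_subfield_def by blast
  define f where "f = from_nat_into F"
  have fF: "f n \<in> F" for n unfolding f_def using ne by (rule from_nat_into)
  have rf: "range f = F" unfolding f_def using ne assms(2) by (rule range_from_nat_into)
  define ub where "ub = (\<lambda>u v. SOME w. w \<in> F \<and> turing_le u w \<and> turing_le v w)"
  have ub: "ub u v \<in> F \<and> turing_le u (ub u v) \<and> turing_le v (ub u v)" if "u \<in> F" "v \<in> F" for u v
  proof -
    have "\<exists>w. w \<in> F \<and> turing_le u w \<and> turing_le v w" using up[OF assms(1,3) that] by blast
    then show ?thesis unfolding ub_def by (rule someI_ex)
  qed
  define z where "z = rec_nat (f 0) (\<lambda>n zn. ub zn (f (Suc n)))"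
  have z0: "z 0 = f 0" and zS: "z (Suc n) = ub (z n) (f (Suc n))" for n by (simp_all add: z_def)
  have zF: "z n \<in> F \<and> turing_le (f n) (z n)" for n
  proof (induction n)
    case 0 then show ?case using z0 fF tl_refl by simp
  next
    case (Suc n)
    have "z n \<in> F" using Suc by simp
    from ub[OF this fF[of "Suc n"]] show ?case unfolding zS by simp
  qed
  have zstep: "turing_le (z n) (z (Suc n))" for n
  proof -
    have "z n \<in> F" using zF by simp
    from ub[OF this fF[of "Suc n"]] show ?thesis unfolding zS by simp
  qed
  have zmono: "i \<le> j \<Longrightarrow> turing_le (z i) (z j)" for i j
  proof (induction j)
    case 0 then show ?case using tl_refl by simp
  next
    case (Suc j)
    show ?case
    proof (cases "i = Suc j")
      case True then show ?thesis using tl_refl by simp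
    next
      case False
      then have "i \<le> j" using Suc.prems by simp
      from tl_trans[OF Suc.IH[OF this] zstep[of j]] show ?thesis .
    qed
  qed
  have zdeg: "z n \<in> turing_degree (z n)" for n
    unfolding turing_degree_def turing_equiv_def using tl_refl by simp
  define C where "C = range (\<lambda>n. turing_degree (z n))"
  have c1: "C \<subseteq> range turing_degree" unfolding C_def by auto
  have c2: "\<forall>d\<in>C. \<forall>e\<in>C. degree_le d e \<or> degree_le e d"
  proof (intro ballI)
    fix d e assume "d \<in> C" "e \<in> C"
    then obtain i j where d: "d = turing_degree (z i)" and e: "e = turing_degree (z j)" unfolding C_def by auto
    show "degree_le d e \<or> degree_le e d"
    proof (cases "i \<le> j")
      case True
      then show ?thesis unfolding d e degree_le_def using zdeg[of i] zdeg[of j] zmono[OF True] by blast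
    next
      case False
      then have "j \<le> i" by simp
      then show ?thesis unfolding d e degree_le_def using zdeg[of i] zdeg[of j] zmono[of j i] by blast
    qed
  qed
  have c3: "F = reals_below C"
  proof
    show "F \<subseteq> reals_below C"
    proof
      fix x assume "x \<in> F"
      then obtain n where "x = f n" using rf by auto
      then have "turing_le x (z n)" using zF[of n] by simp
      then show "x \<in> reals_below C" unfolding reals_below_def C_def using zdeg[of n] by blast
    qed
  next
    show "reals_below C \<subseteq> F"
    proof
      fix x assume "x \<in> reals_below C"
      then obtain n y where y: "y \<in> turing_degree (z n)" and xy: "turing_le x y"
        unfolding reals_below_def C_def by auto
      have "turing_le y (z n)" using y unfolding turing_degree_def turing_equiv_def by simp
      then have "turing_le x (z n)" using xy tl_trans by blast
      moreover have "z n \<in> F" using zF[of n] by simp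
      ultimately show "x \<in> F" using down[OF assms(1,3)] by blast
    qed
  qed
  show ?thesis using c1 c2 c3 by blast
qed

end
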